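(* Suppose the SVI in extensive form has at least one solution and that $(ATA)^{-1}$ is outer Lipschitz continuous at $0$. Let $\{(x_k,w_k)\}$ be an infinite sequence generated by the IPHA. Then $\{(x_k,w_k)\}$ converges linearly to a solution $(x^*,w^* )$ of the SVI in extensive form in the norm $\|(x,w)\|_{M_r}=\sqrt{\|x\|^2+r^{-2}\|w\|^2}$.
   Context: Multistage setting: $\Xi$ is a finite set of scenarios $\xi=(\xi_1,\dots,\xi_N)$ with probabilities $p(\xi)>0$; $n=n_1+\dots+n_N$. $\mathcal L_n$ is the space of functions $x:\Xi\to\mathbb R^n$, $x(\xi)=(x_1(\xi),\dots,x_N(\xi))$, $x_j(\xi)\in\mathbb R^{n_j}$, with inner product $\langle x,w\rangle=\sum_{\xi}p(\xi)\sum_{j}\langle x_j(\xi),w_j(\xi)\rangle$ and norm $\|\cdot\|$. $\mathcal N=\{x\in\mathcal L_n: x_j(\xi)\text{ does not depend on }\xi_j,\dots,\xi_N\}$, $\mathcal M=\mathcal N^\perp$, with orthogonal projections $P_{\mathcal N},P_{\mathcal M}$. For each $\xi$, $C(\xi)\subset\mathbb R^n$ is nonempty closed convex and $F(\cdot,\xi):\mathbb R^n\to\mathbb R^n$ is continuous monotone; $\mathcal C=\{x\in\mathcal L_n: x(\xi)\in C(\xi)\ \forall\xi\}$ and $\mathcal F(x)(\xi)=F(x(\xi),\xi)$. $r>0$ fixed. SVI in extensive form: find $x\in\mathcal N$, $w\in\mathcal M$ with $-F(x(\xi),\xi)-w(\xi)\in N_{C(\xi)}(x(\xi))$ for all $\xi$.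 $T:\mathcal L_n\rightrightarrows\mathcal L_n$ is defined by $z\in T(y)\iff P_{\mathcal N}(z)+P_{\mathcal M}(y)\in(\mathcal F+N_{\mathcal C})(P_{\mathcal N}(y)+P_{\mathcal M}(z))$, and $A(u)=P_{\mathcal N}(u)+rP_{\mathcal M}(u)$. For $S=ATA$, $S^{-1}$ is outer Lipschitz continuous at $0$ if $S^{-1}(0)$ is closed and there exist $L_1,L_2\ge0$ with $S^{-1}(v)\subset S^{-1}(0)+L_1\|v\|B$ for all $v\in L_2B$, where $B$ is the closed unit ball of $\mathcal L_n$. IPHA: choose $x_0\in\mathcal N$, $w_0\in\mathcal M$, $\bar\sigma\in(0,1)$, $\theta\in(0,1)$. At iteration $k$: choose $\sigma_k\in[0,\bar\sigma)$, find $\hat x^k,\hat w^k\in\mathcal L_n$ with $r(x_k(\xi)-\hat x^k(\xi))-w_k(\xi)\in F(\hat w^k(\xi),\xi)+N_{C(\xi)}(\hat w^k(\xi))$ for all $\xi$, $\delta^k=\hat w^k-\hat x^k$, and $\|\delta^k\|^2\le\sigma_k^2(\|a_k\|^2+\|b_k\|^2)$, where $a_k=x_k-P_{\mathcal N}(\hat x^k)+P_{\mathcal M}(\hat w^k)$, $b_k=x_k-P_{\mathcal N}(\hat w^k)+P_{\mathcal M}(\hat x^k)$. If $b_k=0$ stop; otherwise choose $\tau_k\in[1-\theta,1+\theta]$, set $\alpha_k=\langle a_k,b_k\rangle/\|a_k\|^2$, $x_{k+1}=x_k-\tau_k\alpha_k(x_k-P_{\mathcal N}(\hat x^k))$, $w_{k+1}=w_k+\tau_k\alpha_k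 rP_{\mathcal M}(\hat w^k)$. *)

theory Defs
  imports "HOL-Analysis.Analysis"
begin

text \<open>Scenarios are the elements of a finite type 's; the scenario data
  (xi_1,...,xi_N) of scenario s is sc s :: nat => 'c (stage k component sc s k).
  Decision coordinates are indexed by a finite type 'i; stg i in {1..N} is the
  stage j of the block x_j containing coordinate i.  The space L_n is
  's => real^'i with the probability-weighted inner product.\<close>

definition ipL :: "('s::finite \<Rightarrow> real) \<Rightarrow> ('s \<Rightarrow> real^'i) \<Rightarrow> ('s \<Rightarrow> real^'i) \<Rightarrow> real" where
  "ipL p x w = (\<Sum>s\<in>UNIV. p s * inner (x s) (w s))"

definition normL :: "('s::finite \<Rightarrow> real) \<Rightarrow> ('s \<Rightarrow> real^'i) \<Rightarrow> real" where
  "normL p x = sqrt (ipL p x x)"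

text \<open>Nonanticipativity subspace: x_j(xi) does not depend on xi_j,...,xi_N.\<close>
definition NNset :: "('s \<Rightarrow> nat \<Rightarrow> 'c) \<Rightarrow> ('i \<Rightarrow> nat) \<Rightarrow> ('s \<Rightarrow> real^'i) set" where
  "NNset sc stg = {x. \<forall>s t i. (\<forall>k\<in>{1..<stg i}. sc s k = sc t k) \<longrightarrow> x s $ i = x t $ i}"

definition MMset :: "('s::finite \<Rightarrow> real) \<Rightarrow> ('s \<Rightarrow> real^'i) set \<Rightarrow> ('s \<Rightarrow> real^'i) set" where
  "MMset p V = {w. \<forall>x\<in>V. ipL p x w = 0}"

definition projL :: "('s::finite \<Rightarrow> real) \<Rightarrow> ('s \<Rightarrow> real^'i) set \<Rightarrow> ('s \<Rightarrow> real^'i) \<Rightarrow> ('s \<Rightarrow> real^'i)" where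
  "projL p V x = (THE y. y \<in> V \<and> (\<forall>z\<in>V. ipL p (\<lambda>s. x s - y s) z = 0))"

definition PN :: "('s::finite \<Rightarrow> real) \<Rightarrow> ('s \<Rightarrow> nat \<Rightarrow> 'c) \<Rightarrow> ('i \<Rightarrow> nat) \<Rightarrow> ('s \<Rightarrow> real^'i) \<Rightarrow> ('s \<Rightarrow> real^'i)" where
  "PN p sc stg = projL p (NNset sc stg)"

definition PM :: "('s::finite \<Rightarrow> real) \<Rightarrow> ('s \<Rightarrow> nat \<Rightarrow> 'c) \<Rightarrow> ('i \<Rightarrow> nat) \<Rightarrow> ('s \<Rightarrow> real^'i) \<Rightarrow> ('s \<Rightarrow> real^'i)" where
  "PM p sc stg = projL p (MMset p (NNset sc stg))"

definition normal_cone :: "(real^'i) set \<Rightarrow> real^'i \<Rightarrow> (real^'i) set" where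
  "normal_cone K x = (if x \<in> K then {v. \<forall>y\<in>K. inner v (y - x) \<le> 0} else {})"

definition CalC :: "('s \<Rightarrow> (real^'i) set) \<Rightarrow> ('s \<Rightarrow> real^'i) set" where
  "CalC C = {x. \<forall>s. x s \<in> C s}"

definition normal_coneL :: "('s::finite \<Rightarrow> real) \<Rightarrow> ('s \<Rightarrow> real^'i) set \<Rightarrow> ('s \<Rightarrow> real^'i) \<Rightarrow> ('s \<Rightarrow> real^'i) set" where
  "normal_coneL p K x = (if x \<in> K then {v. \<forall>y\<in>K. ipL p v (\<lambda>s. y s - x s) \<le> 0} else {})"

definition FNC :: "('s::finite \<Rightarrow> real) \<Rightarrow> (real^'i \<Rightarrow> 's \<Rightarrow> real^'i) \<Rightarrow> ('s \<Rightarrow> (real^'i) set)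
     \<Rightarrow> ('s \<Rightarrow> real^'i) \<Rightarrow> ('s \<Rightarrow> real^'i) set" where
  "FNC p F C u = {(\<lambda>s. F (u s) s + v s) | v. v \<in> normal_coneL p (CalC C) u}"

definition opT :: "('s::finite \<Rightarrow> real) \<Rightarrow> ('s \<Rightarrow> nat \<Rightarrow> 'c) \<Rightarrow> ('i \<Rightarrow> nat)
     \<Rightarrow> (real^'i \<Rightarrow> 's \<Rightarrow> real^'i) \<Rightarrow> ('s \<Rightarrow> (real^'i) set) \<Rightarrow> ('s \<Rightarrow> real^'i) \<Rightarrow> ('s \<Rightarrow> real^'i) set" where
  "opT p sc stg F C y = {z. (\<lambda>s. PN p sc stg z s + PM p sc stg y s)
       \<in> FNC p F C (\<lambda>s. PN p sc stg y s + PM p sc stg z s)}"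

definition opA :: "('s::finite \<Rightarrow> real) \<Rightarrow> ('s \<Rightarrow> nat \<Rightarrow> 'c) \<Rightarrow> ('i \<Rightarrow> nat) \<Rightarrow> real
     \<Rightarrow> ('s \<Rightarrow> real^'i) \<Rightarrow> ('s \<Rightarrow> real^'i)" where
  "opA p sc stg r u = (\<lambda>s. PN p sc stg u s + r *\<^sub>R PM p sc stg u s)"

definition Sinv :: "('s::finite \<Rightarrow> real) \<Rightarrow> ('s \<Rightarrow> nat \<Rightarrow> 'c) \<Rightarrow> ('i \<Rightarrow> nat)
     \<Rightarrow> (real^'i \<Rightarrow> 's \<Rightarrow> real^'i) \<Rightarrow> ('s \<Rightarrow> (real^'i) set) \<Rightarrow> real
     \<Rightarrow> ('s \<Rightarrow> real^'i) \<Rightarrow> ('s \<Rightarrow> real^'i) set" where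
  "Sinv p sc stg F C r v = {u. \<exists>z\<in>opT p sc stg F C (opA p sc stg r u). v = opA p sc stg r z}"

definition closedL :: "('s::finite \<Rightarrow> real) \<Rightarrow> ('s \<Rightarrow> real^'i) set \<Rightarrow> bool" where
  "closedL p S = (\<forall>u f. (\<forall>k. f k \<in> S) \<and> ((\<lambda>k. normL p (\<lambda>s. f k s - u s)) \<longlonglongrightarrow> 0) \<longrightarrow> u \<in> S)"

definition outer_lipschitz_at_0 :: "('s::finite \<Rightarrow> real) \<Rightarrow> (('s \<Rightarrow> real^'i) \<Rightarrow> ('s \<Rightarrow> real^'i) set) \<Rightarrow> bool" where
  "outer_lipschitz_at_0 p G =
     (closedL p (G (\<lambda>s. 0)) \<and>
      (\<exists>L1 L2. L1 \<ge> 0 \<and> L2 > 0 \<and>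
         (\<forall>v. normL p v \<le> L2 \<longrightarrow>
            (\<forall>u\<in>G v. \<exists>u0\<in>G (\<lambda>s. 0). normL p (\<lambda>s. u s - u0 s) \<le> L1 * normL p v))))"

definition svi_solution :: "('s::finite \<Rightarrow> real) \<Rightarrow> ('s \<Rightarrow> nat \<Rightarrow> 'c) \<Rightarrow> ('i \<Rightarrow> nat)
     \<Rightarrow> (real^'i \<Rightarrow> 's \<Rightarrow> real^'i) \<Rightarrow> ('s \<Rightarrow> (real^'i) set) \<Rightarrow> ('s \<Rightarrow> real^'i) \<Rightarrow> ('s \<Rightarrow> real^'i) \<Rightarrow> bool" where
  "svi_solution p sc stg F C x w =
     (x \<in> NNset sc stg \<and> w \<in> MMset p (NNset sc stg) \<and>
      (\<forall>s. - F (x s) s - w s \<in> normal_cone (C s) (x s)))"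

definition ipha_a :: "('s::finite \<Rightarrow> real) \<Rightarrow> ('s \<Rightarrow> nat \<Rightarrow> 'c) \<Rightarrow> ('i \<Rightarrow> nat)
     \<Rightarrow> ('s \<Rightarrow> real^'i) \<Rightarrow> ('s \<Rightarrow> real^'i) \<Rightarrow> ('s \<Rightarrow> real^'i) \<Rightarrow> ('s \<Rightarrow> real^'i)" where
  "ipha_a p sc stg xk xh wh = (\<lambda>s. xk s - PN p sc stg xh s + PM p sc stg wh s)"

definition ipha_b :: "('s::finite \<Rightarrow> real) \<Rightarrow> ('s \<Rightarrow> nat \<Rightarrow> 'c) \<Rightarrow> ('i \<Rightarrow> nat)
     \<Rightarrow> ('s \<Rightarrow> real^'i) \<Rightarrow> ('s \<Rightarrow> real^'i) \<Rightarrow> ('s \<Rightarrow> real^'i) \<Rightarrow> ('s \<Rightarrow> real^'i)" where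
  "ipha_b p sc stg xk xh wh = (\<lambda>s. xk s - PN p sc stg wh s + PM p sc stg xh s)"

end

theory Submission
  imports Defs
begin

definition embL :: "('s::finite \<Rightarrow> real) \<Rightarrow> ('s \<Rightarrow> real^'i::finite) \<Rightarrow> real^('s \<times> 'i)" where
  "embL p x = (\<chi> j. sqrt (p (fst j)) * (x (fst j) $ snd j))"

lemma embL_add: "embL p (\<lambda>s. x s + y s) = embL p x + embL p y"
  by (simp add: embL_def vec_eq_iff algebra_simps)
lemma embL_diff: "embL p (\<lambda>s. x s - y s) = embL p x - embL p y"
  by (simp add: embL_def vec_eq_iff algebra_simps)
lemma embL_scale: "embL p (\<lambda>s. c *\<^sub>R x s) = c *\<^sub>R embL p x"
  by (simp add: embL_def vec_eq_iff algebra_simps)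
lemma embL_uminus: "embL p (\<lambda>s. - x s) = - embL p x"
  by (simp add: embL_def vec_eq_iff algebra_simps)
lemma embL_zero: "embL p (\<lambda>s. 0) = 0"
  by (simp add: embL_def vec_eq_iff)

lemma ipL_embL:
  assumes "\<And>s. p s \<ge> 0"
  shows "ipL p x y = inner (embL p x) (embL p y)"
proof -
  have h1: "inner (embL p x) (embL p y) = (\<Sum>j\<in>UNIV. p (fst j) * (x (fst j) $ snd j * y (fst j) $ snd j))"
    unfolding inner_vec_def
  proof (intro sum.cong refl)
    fix j :: "'a \<times> 'b"
    have "sqrt (p (fst j)) * sqrt (p (fst j)) = p (fst j)" using assms by simp
    then show "inner (embL p x $ j) (embL p y $ j) =
      p (fst j) * (x (fst j) $ snd j * y (fst j) $ snd j)"
      unfolding embL_def inner_real_def vec_lambda_beta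
      by (metis (no_types, lifting) mult.assoc mult.left_commute)
  qed
  have h2: "(\<Sum>s\<in>UNIV. \<Sum>i\<in>UNIV. p s * (x s $ i * y s $ i)) = (\<Sum>j\<in>UNIV. p (fst j) * (x (fst j) $ snd j * y (fst j) $ snd j))"
    by (simp add: sum.cartesian_product case_prod_beta)
  have h3: "(\<Sum>s\<in>UNIV. \<Sum>i\<in>UNIV. p s * (x s $ i * y s $ i)) = ipL p x y"
    unfolding ipL_def inner_vec_def inner_real_def by (simp add: sum_distrib_left)
  show ?thesis using h1 h2 h3 by metis
qed

lemma normL_embL:
  assumes "\<And>s. p s \<ge> 0"
  shows "normL p x = norm (embL p x)"
  unfolding normL_def ipL_embL[OF assms] by (simp add: norm_eq_sqrt_inner)

lemma embL_inj:
  assumes "\<And>s. p s > 0" "embL p x = embL p y"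
  shows "x = y"
proof (rule ext)
  fix s
  show "x s = y s"
  proof (subst vec_eq_iff, intro allI)
    fix i
    have "embL p x $ (s,i) = embL p y $ (s,i)" using assms(2) by simp
    then have "sqrt (p s) * x s $ i = sqrt (p s) * y s $ i" by (simp add: embL_def)
    moreover have "sqrt (p s) \<noteq> 0" using assms(1)[of s] by simp
    ultimately show "x s $ i = y s $ i" by simp
  qed
qed


definition lsub :: "('s \<Rightarrow> real^'i) set \<Rightarrow> bool" where
  "lsub V = ((\<lambda>s. 0) \<in> V \<and> (\<forall>x\<in>V. \<forall>y\<in>V. (\<lambda>s. x s + y s) \<in> V) \<and> (\<forall>c. \<forall>x\<in>V. (\<lambda>s. c *\<^sub>R x s) \<in> V))"

lemma lsub_zero: "lsub V \<Longrightarrow> (\<lambda>s. 0) \<in> V" by (simp add: lsub_def)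
lemma lsub_add: "lsub V \<Longrightarrow> x \<in> V \<Longrightarrow> y \<in> V \<Longrightarrow> (\<lambda>s. x s + y s) \<in> V" by (simp add: lsub_def)
lemma lsub_scale: "lsub V \<Longrightarrow> x \<in> V \<Longrightarrow> (\<lambda>s. c *\<^sub>R x s) \<in> V" by (simp add: lsub_def)
lemma lsub_uminus: "lsub V \<Longrightarrow> x \<in> V \<Longrightarrow> (\<lambda>s. - x s) \<in> V"
  using lsub_scale[of V x "-1"] by simp
lemma lsub_diff: "lsub V \<Longrightarrow> x \<in> V \<Longrightarrow> y \<in> V \<Longrightarrow> (\<lambda>s. x s - y s) \<in> V"
  using lsub_add[of V x "\<lambda>s. - y s"] lsub_uminus[of V y] by simp

lemma lsub_NN: "lsub (NNset sc stg)"
  unfolding lsub_def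
proof (intro conjI ballI allI)
  show "(\<lambda>s. 0) \<in> NNset sc stg" unfolding NNset_def by simp
next
  fix x y assume x: "x \<in> NNset sc stg" and y: "y \<in> NNset sc stg"
  show "(\<lambda>s. x s + y s) \<in> NNset sc stg" unfolding NNset_def
  proof (intro CollectI allI impI)
    fix s t i assume h: "\<forall>k\<in>{1..<stg i}. sc s k = sc t k"
    have "x s $ i = x t $ i" "y s $ i = y t $ i" using x y h unfolding NNset_def by blast+
    then show "(x s + y s) $ i = (x t + y t) $ i" by simp
  qed
next
  fix c x assume x: "x \<in> NNset sc stg"
  show "(\<lambda>s. c *\<^sub>R x s) \<in> NNset sc stg" unfolding NNset_def
  proof (intro CollectI allI impI)
    fix s t i assume h: "\<forall>k\<in>{1..<stg i}. sc s k = sc t k"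
    have "x s $ i = x t $ i" using x h unfolding NNset_def by blast
    then show "(c *\<^sub>R x s) $ i = (c *\<^sub>R x t) $ i" by simp
  qed
qed

lemma lsub_MM:
  assumes "\<And>s. p s \<ge> 0"
  shows "lsub (MMset p V)"
  unfolding lsub_def MMset_def ipL_embL[OF assms] embL_add embL_scale embL_zero
  by (auto simp only: mem_Collect_eq embL_add embL_scale embL_zero inner_add_right inner_scaleR_right inner_zero_right mult_zero_right add_0)

lemma subspace_embL:
  assumes "lsub V"
  shows "subspace (embL p ` V)"
  unfolding subspace_def
proof (intro conjI ballI allI)
  have "embL p (\<lambda>s. 0) \<in> embL p ` V" using lsub_zero[OF assms] by (rule imageI)
  then show "0 \<in> embL p ` V" by (simp only: embL_zero)
next
  fix a b assume "a \<in> embL p ` V" "b \<in> embL p ` V"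
  then obtain x y where "x \<in> V" "y \<in> V" "a = embL p x" "b = embL p y" by auto
  have "embL p (\<lambda>s. x s + y s) \<in> embL p ` V" using lsub_add[OF assms \<open>x \<in> V\<close> \<open>y \<in> V\<close>] by (rule imageI)
  then show "a + b \<in> embL p ` V" using \<open>a = embL p x\<close> \<open>b = embL p y\<close> by (simp only: embL_add)
next
  fix c a assume "a \<in> embL p ` V"
  then obtain x where "x \<in> V" "a = embL p x" by auto
  have "embL p (\<lambda>s. c *\<^sub>R x s) \<in> embL p ` V" using lsub_scale[OF assms \<open>x \<in> V\<close>] by (rule imageI)
  then show "c *\<^sub>R a \<in> embL p ` V" using \<open>a = embL p x\<close> by (simp only: embL_scale)
qed

lemma projL_eq:
  assumes p: "\<And>s. p s > 0" and V: "lsub V" and y: "y \<in> V"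
    and orth: "\<And>z. z \<in> V \<Longrightarrow> ipL p (\<lambda>s. x s - y s) z = 0"
  shows "projL p V x = y"
  unfolding projL_def
proof (rule the1_equality)
  have p0: "\<And>s. p s \<ge> 0" using p by (simp add: less_imp_le)
  show "\<exists>!y. y \<in> V \<and> (\<forall>z\<in>V. ipL p (\<lambda>s. x s - y s) z = 0)"
  proof (rule ex1I[of _ y])
    show "y \<in> V \<and> (\<forall>z\<in>V. ipL p (\<lambda>s. x s - y s) z = 0)" using y orth by auto
  next
    fix y' assume h: "y' \<in> V \<and> (\<forall>z\<in>V. ipL p (\<lambda>s. x s - y' s) z = 0)"
    have d: "(\<lambda>s. y' s - y s) \<in> V" using lsub_diff[OF V] h y by auto
    have e1: "inner (embL p x - embL p y) (embL p y' - embL p y) = 0"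
      using orth[OF d] unfolding ipL_embL[where p=p, OF p0] embL_diff .
    have "ipL p (\<lambda>s. x s - y' s) (\<lambda>s. y' s - y s) = 0" using h d by blast
    then have e2: "inner (embL p x - embL p y') (embL p y' - embL p y) = 0"
      unfolding ipL_embL[where p=p, OF p0] embL_diff .
    have "inner (embL p y' - embL p y) (embL p y' - embL p y) = 0"
      using e1 e2 by (simp add: inner_diff_left inner_diff_right)
    then have "embL p y' = embL p y" by simp
    then show "y' = y" using embL_inj[of p y' y] p by blast
  qed
  show "y \<in> V \<and> (\<forall>z\<in>V. ipL p (\<lambda>s. x s - y s) z = 0)" using y orth by auto
qed

lemma ipL_sym: "ipL p x y = ipL p y x"
  unfolding ipL_def by (simp add: inner_commute)

lemma decomp_exists:
  assumes p: "\<And>s. p s > 0"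
  shows "\<exists>n\<in>NNset sc stg. \<exists>m\<in>MMset p (NNset sc stg). x = (\<lambda>s. n s + m s)"
proof -
  have p0: "\<And>s. p s \<ge> 0" using p by (simp add: less_imp_le)
  let ?S = "embL p ` NNset sc stg"
  have sub: "subspace ?S" by (rule subspace_embL[OF lsub_NN])
  obtain y z where y: "y \<in> span ?S" and z: "\<And>w. w \<in> span ?S \<Longrightarrow> orthogonal z w" and yz: "embL p x = y + z"
    using orthogonal_subspace_decomp_exists[of ?S "embL p x"] by blast
  from y sub have "y \<in> ?S" by (metis span_eq_iff)
  then obtain n where n: "n \<in> NNset sc stg" "y = embL p n" by auto
  define m where "m = (\<lambda>s. x s - n s)"
  have "embL p m = z" using yz n unfolding m_def embL_diff by simp
  moreover have "m \<in> MMset p (NNset sc stg)"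
    unfolding MMset_def
  proof (intro CollectI ballI)
    fix u assume "u \<in> NNset sc stg"
    then have "embL p u \<in> span ?S" by (simp add: span_base)
    then have "orthogonal z (embL p u)" by (rule z)
    then show "ipL p u m = 0" unfolding ipL_embL[where p=p, OF p0] \<open>embL p m = z\<close> orthogonal_def
      by (simp add: inner_commute)
  qed
  moreover have "x = (\<lambda>s. n s + m s)" unfolding m_def by simp
  ultimately show ?thesis using n by blast
qed

lemma PNPM_unique:
  assumes p: "\<And>s. p s > 0" and n: "n \<in> NNset sc stg" and m: "m \<in> MMset p (NNset sc stg)"
  shows "PN p sc stg (\<lambda>s. n s + m s) = n" "PM p sc stg (\<lambda>s. n s + m s) = m"
proof -
  have p0: "\<And>s. p s \<ge> 0" using p by (simp add: less_imp_le)
  show "PN p sc stg (\<lambda>s. n s + m s) = n"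
    unfolding PN_def
  proof (rule projL_eq[OF p lsub_NN n])
    fix z assume "z \<in> NNset sc stg"
    then have "ipL p z m = 0" using m unfolding MMset_def by auto
    then show "ipL p (\<lambda>s. n s + m s - n s) z = 0" by (simp add: ipL_sym)
  qed
  show "PM p sc stg (\<lambda>s. n s + m s) = m"
    unfolding PM_def
  proof (rule projL_eq[OF p lsub_MM[where p=p, OF p0] m])
    fix z assume "z \<in> MMset p (NNset sc stg)"
    then have "ipL p n z = 0" using n unfolding MMset_def by auto
    then show "ipL p (\<lambda>s. n s + m s - m s) z = 0" by simp
  qed
qed

lemma PNPM_decomp:
  assumes p: "\<And>s. p s > 0"
  shows "PN p sc stg x \<in> NNset sc stg" "PM p sc stg x \<in> MMset p (NNset sc stg)"
    "x = (\<lambda>s. PN p sc stg x s + PM p sc stg x s)"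
proof -
  obtain n m where n: "n \<in> NNset sc stg" and m: "m \<in> MMset p (NNset sc stg)" and x: "x = (\<lambda>s. n s + m s)"
    using decomp_exists[where p=p and sc=sc and stg=stg and x=x, OF p] by blast
  have "PN p sc stg x = n" "PM p sc stg x = m" using PNPM_unique[OF p n m] x by auto
  then show "PN p sc stg x \<in> NNset sc stg" "PM p sc stg x \<in> MMset p (NNset sc stg)"
    "x = (\<lambda>s. PN p sc stg x s + PM p sc stg x s)" using n m x by auto
qed

lemma NM_orth:
  assumes p: "\<And>s. p s > 0" and n: "n \<in> NNset sc stg" and m: "m \<in> MMset p (NNset sc stg)"
  shows "inner (embL p n) (embL p m) = 0"
proof -
  have p0: "\<And>s. p s \<ge> 0" using p by (simp add: less_imp_le)
  show ?thesis using n m unfolding MMset_def ipL_embL[where p=p, OF p0] by auto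
qed


lemma embL_surj:
  assumes p: "\<And>s. p s > 0"
  shows "embL p (\<lambda>s. \<chi> i. y $ (s, i) / sqrt (p s)) = y"
proof -
  have "\<And>s. sqrt (p s) \<noteq> 0" using p by (simp add: less_imp_le) (metis p less_irrefl)
  then show ?thesis unfolding embL_def by (simp add: vec_eq_iff)
qed

lemma ncL_iff:
  assumes p: "\<And>s. p s > 0"
  shows "v \<in> normal_coneL p (CalC C) u \<longleftrightarrow> (\<forall>s. v s \<in> normal_cone (C s) (u s))"
proof
  assume h: "v \<in> normal_coneL p (CalC C) u"
  then have uC: "u \<in> CalC C" unfolding normal_coneL_def by (auto split: if_splits)
  then have h2: "\<forall>y\<in>CalC C. ipL p v (\<lambda>s. y s - u s) \<le> 0" using h unfolding normal_coneL_def by auto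
  show "\<forall>s. v s \<in> normal_cone (C s) (u s)"
  proof
    fix s
    have us: "u s \<in> C s" using uC unfolding CalC_def by auto
    have "inner (v s) (y0 - u s) \<le> 0" if y0: "y0 \<in> C s" for y0
    proof -
      have "u(s := y0) \<in> CalC C" using uC y0 unfolding CalC_def by auto
      then have "ipL p v (\<lambda>t. (u(s := y0)) t - u t) \<le> 0" using h2 by blast
      moreover have "ipL p v (\<lambda>t. (u(s := y0)) t - u t) = p s * inner (v s) (y0 - u s)"
      proof -
        have "ipL p v (\<lambda>t. (u(s := y0)) t - u t) = (\<Sum>t\<in>UNIV. if t = s then p s * inner (v s) (y0 - u s) else 0)"
          unfolding ipL_def by (intro sum.cong refl) auto
        also have "\<dots> = p s * inner (v s) (y0 - u s)" by simp
        finally show ?thesis .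
      qed
      ultimately have "p s * inner (v s) (y0 - u s) \<le> 0" by simp
      then show ?thesis using p[of s] by (simp add: mult_le_0_iff)
    qed
    then show "v s \<in> normal_cone (C s) (u s)" unfolding normal_cone_def using us by auto
  qed
next
  assume h: "\<forall>s. v s \<in> normal_cone (C s) (u s)"
  then have uC: "u \<in> CalC C" unfolding CalC_def normal_cone_def by (auto split: if_splits)
  have "ipL p v (\<lambda>s. y s - u s) \<le> 0" if y: "y \<in> CalC C" for y
  proof -
    have "p s * inner (v s) (y s - u s) \<le> 0" for s
    proof -
      have "u s \<in> C s" "y s \<in> C s" using uC y unfolding CalC_def by auto
      then have "inner (v s) (y s - u s) \<le> 0" using h unfolding normal_cone_def by (auto split: if_splits)
      then show ?thesis using p[of s] by (simp add: mult_le_0_iff)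
    qed
    then show ?thesis unfolding ipL_def by (intro sum_nonpos) auto
  qed
  then show "v \<in> normal_coneL p (CalC C) u" unfolding normal_coneL_def using uC by auto
qed

lemma FNC_iff:
  assumes p: "\<And>s. p s > 0"
  shows "y \<in> FNC p F C u \<longleftrightarrow> (\<forall>s. y s - F (u s) s \<in> normal_cone (C s) (u s))"
proof
  assume "y \<in> FNC p F C u"
  then obtain v where v: "v \<in> normal_coneL p (CalC C) u" and y: "y = (\<lambda>s. F (u s) s + v s)"
    unfolding FNC_def by blast
  show "\<forall>s. y s - F (u s) s \<in> normal_cone (C s) (u s)" using v y ncL_iff[of p v C u] p by simp
next
  assume h: "\<forall>s. y s - F (u s) s \<in> normal_cone (C s) (u s)"
  then have "(\<lambda>s. y s - F (u s) s) \<in> normal_coneL p (CalC C) u" using ncL_iff[of p _ C u] p by simp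
  moreover have "y = (\<lambda>s. F (u s) s + (y s - F (u s) s))" by simp
  ultimately show "y \<in> FNC p F C u" unfolding FNC_def mem_Collect_eq
    by (intro exI[of _ "\<lambda>s. y s - F (u s) s"] conjI) auto
qed

lemma pointwise_mono:
  assumes Fm: "\<And>y z. inner (F y - F z) (y - z) \<ge> 0"
    and a: "a - F y \<in> normal_cone K y" and b: "b - F z \<in> normal_cone K z"
  shows "inner (a - b) (y - z) \<ge> 0"
proof -
  have y: "y \<in> K" and z: "z \<in> K" using a b unfolding normal_cone_def by (auto split: if_splits)
  have 1: "inner (a - F y) (z - y) \<le> 0" using a y z unfolding normal_cone_def by auto
  have 2: "inner (b - F z) (y - z) \<le> 0" using b y z unfolding normal_cone_def by auto
  have 3: "inner (F y - F z) (y - z) \<ge> 0" by (rule Fm)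
  have "inner (a - b) (y - z) = inner (F y - F z) (y - z) - inner (a - F y) (z - y) - inner (b - F z) (y - z)"
    by (simp add: inner_diff_left inner_diff_right inner_commute)
  then show ?thesis using 1 2 3 by linarith
qed


lemma PNPM_unique':
  assumes p: "\<And>s. p s > 0" and n: "n \<in> NNset sc stg" and m: "m \<in> MMset p (NNset sc stg)"
    and y: "y = (\<lambda>s. n s + m s)"
  shows "PN p sc stg y = n \<and> PM p sc stg y = m"
  using PNPM_unique[where p=p and n=n and m=m and sc=sc and stg=stg] p n m y by blast

lemma opA_proj:
  assumes p: "\<And>s. p s > 0"
  shows "PN p sc stg (opA p sc stg r u) = PN p sc stg u \<and> PM p sc stg (opA p sc stg r u) = (\<lambda>s. r *\<^sub>R PM p sc stg u s)"
proof (rule PNPM_unique'[where p=p, OF p])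
  have p0: "\<And>s. p s \<ge> 0" using p by (simp add: less_imp_le)
  show "PN p sc stg u \<in> NNset sc stg" using PNPM_decomp[where p=p] p by blast
  show "(\<lambda>s. r *\<^sub>R PM p sc stg u s) \<in> MMset p (NNset sc stg)"
    using lsub_scale[OF lsub_MM[where p=p, OF p0]] PNPM_decomp[where p=p] p by blast
  show "opA p sc stg r u = (\<lambda>s. PN p sc stg u s + r *\<^sub>R PM p sc stg u s)" unfolding opA_def ..
qed

lemma PNPM_zero:
  assumes p: "\<And>s. p s > 0"
  shows "PN p sc stg (\<lambda>s. 0) = (\<lambda>s. 0) \<and> PM p sc stg (\<lambda>s. 0) = (\<lambda>s. 0)"
proof (rule PNPM_unique'[where p=p, OF p])
  have p0: "\<And>s. p s \<ge> 0" using p by (simp add: less_imp_le)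
  show "(\<lambda>s. 0) \<in> NNset sc stg" by (rule lsub_zero[OF lsub_NN])
  show "(\<lambda>s. 0) \<in> MMset p (NNset sc stg)" by (rule lsub_zero[OF lsub_MM[where p=p, OF p0]])
qed simp

lemma Sinv0_iff:
  assumes p: "\<And>s. p s > 0" and r: "r > 0"
  shows "u \<in> Sinv p sc stg F C r (\<lambda>s. 0) \<longleftrightarrow>
         (\<forall>s. r *\<^sub>R PM p sc stg u s - F (PN p sc stg u s) s \<in> normal_cone (C s) (PN p sc stg u s))"
    (is "?L \<longleftrightarrow> ?R")
proof
  have p0: "\<And>s. p s \<ge> 0" using p by (simp add: less_imp_le)
  note A = opA_proj[where p=p and sc=sc and stg=stg and r=r and u=u, OF p]
  assume ?L
  then obtain z where z: "z \<in> opT p sc stg F C (opA p sc stg r u)" and z0: "(\<lambda>s. 0) = opA p sc stg r z"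
    unfolding Sinv_def by blast
  have zN0: "PN p sc stg (\<lambda>s. 0) = PN p sc stg z \<and> PM p sc stg (\<lambda>s. 0) = (\<lambda>s. r *\<^sub>R PM p sc stg z s)"
  proof (rule PNPM_unique'[where p=p, OF p])
    show "PN p sc stg z \<in> NNset sc stg" using PNPM_decomp[where p=p] p by blast
    show "(\<lambda>s. r *\<^sub>R PM p sc stg z s) \<in> MMset p (NNset sc stg)"
      using lsub_scale[OF lsub_MM[where p=p, OF p0]] PNPM_decomp[where p=p] p by blast
    show "(\<lambda>s. 0) = (\<lambda>s. PN p sc stg z s + r *\<^sub>R PM p sc stg z s)" using z0 unfolding opA_def .
  qed
  have Z0: "PN p sc stg (\<lambda>s. 0) = (\<lambda>s. 0)" "PM p sc stg (\<lambda>s. 0) = (\<lambda>s. 0)"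
    using PNPM_zero[where p=p and sc=sc and stg=stg, OF p] by blast+
  have "PN p sc stg z = (\<lambda>s. 0)" "(\<lambda>s. r *\<^sub>R PM p sc stg z s) = (\<lambda>s. 0)"
    by (rule trans[OF sym[OF conjunct1[OF zN0]] Z0(1)], rule trans[OF sym[OF conjunct2[OF zN0]] Z0(2)])
  then have zN: "PN p sc stg z = (\<lambda>s. 0)" and zM: "PM p sc stg z = (\<lambda>s. 0)"
    using r by (auto simp: fun_eq_iff)
  from z have "(\<lambda>s. PN p sc stg z s + PM p sc stg (opA p sc stg r u) s)
       \<in> FNC p F C (\<lambda>s. PN p sc stg (opA p sc stg r u) s + PM p sc stg z s)"
    unfolding opT_def by blast
  then have "(\<lambda>s. r *\<^sub>R PM p sc stg u s) \<in> FNC p F C (PN p sc stg u)"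
    using A zN zM by simp
  then show ?R using FNC_iff[where p=p and y="\<lambda>s. r *\<^sub>R PM p sc stg u s" and F=F and C=C and u="PN p sc stg u", OF p] by simp
next
  have p0: "\<And>s. p s \<ge> 0" using p by (simp add: less_imp_le)
  note A = opA_proj[where p=p and sc=sc and stg=stg and r=r and u=u, OF p]
  assume ?R
  then have h: "(\<lambda>s. r *\<^sub>R PM p sc stg u s) \<in> FNC p F C (PN p sc stg u)"
    using FNC_iff[where p=p and y="\<lambda>s. r *\<^sub>R PM p sc stg u s" and F=F and C=C and u="PN p sc stg u", OF p] by simp
  have Z: "PN p sc stg (\<lambda>s. 0) = (\<lambda>s. 0)" "PM p sc stg (\<lambda>s. 0) = (\<lambda>s. 0)"
    using PNPM_zero[where p=p, OF p] by blast+
  have "(\<lambda>s. 0) \<in> opT p sc stg F C (opA p sc stg r u)"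
    unfolding opT_def using h A Z by simp
  moreover have "(\<lambda>s. 0) = opA p sc stg r (\<lambda>s. 0)" unfolding opA_def using Z by simp
  ultimately show ?L unfolding Sinv_def by blast
qed


lemma iter_in_Sinv:
  assumes p: "\<And>s. p s > 0" and r: "r > 0" and x: "x \<in> NNset sc stg" and w: "w \<in> MMset p (NNset sc stg)"
    and sub: "\<And>s. r *\<^sub>R (x s - xh s) - w s - F (wh s) s \<in> normal_cone (C s) (wh s)"
  shows "(\<lambda>s. PN p sc stg wh s - PM p sc stg xh s - (1/r) *\<^sub>R w s)
           \<in> Sinv p sc stg F C r (\<lambda>s. r *\<^sub>R ipha_a p sc stg x xh wh s)"
proof -
  have p0: "\<And>s. p s \<ge> 0" using p by (simp add: less_imp_le)
  have LN: "lsub (NNset sc stg)" by (rule lsub_NN)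
  have LM: "lsub (MMset p (NNset sc stg))" by (rule lsub_MM[where p=p, OF p0])
  have D: "\<And>v. PN p sc stg v \<in> NNset sc stg" "\<And>v. PM p sc stg v \<in> MMset p (NNset sc stg)"
    "\<And>v. v = (\<lambda>s. PN p sc stg v s + PM p sc stg v s)" using PNPM_decomp[where p=p] p by blast+
  define u where "u = (\<lambda>s. PN p sc stg wh s - PM p sc stg xh s - (1/r) *\<^sub>R w s)"
  define z where "z = (\<lambda>s. r *\<^sub>R (x s - PN p sc stg xh s) + PM p sc stg wh s)"
  have mu: "(\<lambda>s. - PM p sc stg xh s - (1/r) *\<^sub>R w s) \<in> MMset p (NNset sc stg)"
    by (intro lsub_diff[OF LM] lsub_uminus[OF LM] lsub_scale[OF LM] D w)
  have pu: "PN p sc stg u = PN p sc stg wh \<and> PM p sc stg u = (\<lambda>s. - PM p sc stg xh s - (1/r) *\<^sub>R w s)"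
    by (rule PNPM_unique'[where p=p, OF p D(1) mu]) (simp add: u_def fun_eq_iff algebra_simps)
  have pAu: "PN p sc stg (opA p sc stg r u) = PN p sc stg wh \<and>
      PM p sc stg (opA p sc stg r u) = (\<lambda>s. r *\<^sub>R (- PM p sc stg xh s - (1/r) *\<^sub>R w s))"
    using opA_proj[where p=p and sc=sc and stg=stg and r=r and u=u, OF p] pu by simp
  have nz: "(\<lambda>s. r *\<^sub>R (x s - PN p sc stg xh s)) \<in> NNset sc stg"
    by (intro lsub_scale[OF LN] lsub_diff[OF LN] D x)
  have pz: "PN p sc stg z = (\<lambda>s. r *\<^sub>R (x s - PN p sc stg xh s)) \<and> PM p sc stg z = PM p sc stg wh"
    by (rule PNPM_unique'[where p=p, OF p nz D(2)]) (simp add: z_def)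
  have Az: "opA p sc stg r z = (\<lambda>s. r *\<^sub>R ipha_a p sc stg x xh wh s)"
    unfolding opA_def ipha_a_def using pz by (simp add: fun_eq_iff algebra_simps)
  have eqwh: "(\<lambda>s. PN p sc stg wh s + PM p sc stg wh s) = wh" using D(3)[of wh] by simp
  have xhs: "\<And>s. xh s = PN p sc stg xh s + PM p sc stg xh s" using D(3)[of xh] by metis
  have "(\<lambda>s. r *\<^sub>R (x s - PN p sc stg xh s) + r *\<^sub>R (- PM p sc stg xh s - (1/r) *\<^sub>R w s)) \<in> FNC p F C wh"
  proof -
    have "r *\<^sub>R (x s - PN p sc stg xh s) + r *\<^sub>R (- PM p sc stg xh s - (1/r) *\<^sub>R w s) - F (wh s) s
          = r *\<^sub>R (x s - xh s) - w s - F (wh s) s" for s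
      using r xhs[of s] by (simp add: algebra_simps)
    then show ?thesis
      using FNC_iff[where p=p and F=F and C=C and u=wh, OF p] sub by simp
  qed
  then have "z \<in> opT p sc stg F C (opA p sc stg r u)"
    unfolding opT_def using pAu pz eqwh by simp
  then show ?thesis unfolding Sinv_def u_def[symmetric] using Az by (metis (mono_tags, lifting) mem_Collect_eq)
qed


lemma step_ineq:
  fixes A B Zk U Zn :: "'a::real_inner"
  assumes key: "inner A (Zk - U) \<ge> inner A B"
    and eAB: "2 * inner A B \<ge> e * ((norm A)\<^sup>2 + (norm B)\<^sup>2)" and e: "e > 0" and A: "A \<noteq> 0"
    and tau1: "1 - \<theta> \<le> \<tau>" and tau2: "\<tau> \<le> 1 + \<theta>" and th: "0 < \<theta>" "\<theta> < 1"
    and Zn: "Zn = Zk - (\<tau> * (inner A B / (norm A)\<^sup>2)) *\<^sub>R A"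
  shows "(norm (Zn - U))\<^sup>2 \<le> (norm (Zk - U))\<^sup>2 - (1 - \<theta>\<^sup>2) * (e/2)\<^sup>2 * ((norm A)\<^sup>2 + (norm B)\<^sup>2)"
proof -
  define a2 where "a2 = (norm A)\<^sup>2"
  define t where "t = inner A B"
  define S where "S = (norm A)\<^sup>2 + (norm B)\<^sup>2"
  define c where "c = \<tau> * (t / a2)"
  have a2: "a2 > 0" using A unfolding a2_def by simp
  have Sa: "S \<ge> a2" unfolding S_def a2_def by simp
  have t: "t \<ge> e/2 * S" using eAB unfolding t_def S_def by simp
  have S0: "S > 0" using Sa a2 by linarith
  have "e/2 * S \<ge> 0" using e S0 by simp
  then have t0: "t \<ge> 0" using t by linarith
  have tau0: "\<tau> > 0" using tau1 th by linarith
  have c0: "c \<ge> 0" unfolding c_def using tau0 t0 a2 by simp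
  have zz: "Zn - U = (Zk - U) - c *\<^sub>R A" unfolding Zn c_def t_def a2_def by simp
  have nn: "(norm (X - c *\<^sub>R A))\<^sup>2 = (norm X)\<^sup>2 - 2 * c * inner A X + c\<^sup>2 * a2" for X
    unfolding a2_def power2_norm_eq_inner by (simp add: inner_diff_left inner_diff_right inner_commute
        algebra_simps power2_eq_square)
  have "(norm (Zn - U))\<^sup>2 = (norm (Zk - U))\<^sup>2 - 2 * c * inner A (Zk - U) + c\<^sup>2 * a2"
    by (simp only: zz nn)
  moreover have "2 * c * t \<le> 2 * c * inner A (Zk - U)"
    using key c0 unfolding t_def by (simp add: mult_left_mono)
  moreover have "c\<^sup>2 * a2 = \<tau>\<^sup>2 * (t\<^sup>2 / a2)" "2 * c * t = 2 * \<tau> * (t\<^sup>2 / a2)"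
    unfolding c_def using a2 by (simp_all add: power2_eq_square)
  ultimately have 1: "(norm (Zn - U))\<^sup>2 \<le> (norm (Zk - U))\<^sup>2 - (2 * \<tau> - \<tau>\<^sup>2) * (t\<^sup>2 / a2)"
    by (simp add: algebra_simps)
  have 2: "2 * \<tau> - \<tau>\<^sup>2 \<ge> 1 - \<theta>\<^sup>2"
  proof -
    have "(\<tau> - 1)\<^sup>2 \<le> \<theta>\<^sup>2" using tau1 tau2 th by (simp add: abs_le_iff power2_le_iff_abs_le)
    then show ?thesis by (simp add: power2_eq_square algebra_simps)
  qed
  have 3: "t\<^sup>2 / a2 \<ge> (e/2)\<^sup>2 * S"
  proof -
    have "(e/2 * S)\<^sup>2 \<le> t\<^sup>2" using t e S0 by (simp add: power_mono)
    then have "(e/2)\<^sup>2 * S * S \<le> t\<^sup>2" by (simp add: power2_eq_square algebra_simps)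
    moreover have "(e/2)\<^sup>2 * S * a2 \<le> (e/2)\<^sup>2 * S * S" using Sa S0 by (simp add: mult_left_mono)
    ultimately have "(e/2)\<^sup>2 * S * a2 \<le> t\<^sup>2" by linarith
    then show ?thesis using a2 by (simp add: pos_le_divide_eq)
  qed
  have 4: "(2 * \<tau> - \<tau>\<^sup>2) * (t\<^sup>2 / a2) \<ge> (1 - \<theta>\<^sup>2) * ((e/2)\<^sup>2 * S)"
  proof (rule mult_mono[OF 2 3])
    have "\<theta>\<^sup>2 \<le> 1" using th by (simp add: power_le_one)
    then show "0 \<le> 2 * \<tau> - \<tau>\<^sup>2" using 2 by linarith
    show "0 \<le> (e/2)\<^sup>2 * S" using S0 by simp
  qed
  show ?thesis using 1 4 unfolding S_def by (simp add: algebra_simps)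
qed


lemma fejer_identity:
  fixes X W xn xm wn wm un um :: "'a::real_inner"
  assumes o: "inner X W = 0" "inner X xm = 0" "inner X wm = 0" "inner X um = 0"
    "inner xn W = 0" "inner xn xm = 0" "inner xn wm = 0" "inner xn um = 0"
    "inner wn W = 0" "inner wn xm = 0" "inner wn wm = 0" "inner wn um = 0"
    "inner un W = 0" "inner un xm = 0" "inner un wm = 0" "inner un um = 0"
    and r: "r > 0"
    and mono: "inner (r *\<^sub>R (X - (xn + xm)) - W - r *\<^sub>R um) ((wn + wm) - un) \<ge> 0"
  shows "inner (X - xn + wm) ((X - (1/r) *\<^sub>R W) - (un + um)) \<ge> inner (X - xn + wm) (X - wn + xm)"
proof -
  have o2: "inner W X = 0" "inner xm X = 0" "inner wm X = 0" "inner um X = 0"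
    "inner W xn = 0" "inner xm xn = 0" "inner wm xn = 0" "inner um xn = 0"
    "inner W wn = 0" "inner xm wn = 0" "inner wm wn = 0" "inner um wn = 0"
    "inner W un = 0" "inner xm un = 0" "inner wm un = 0" "inner um un = 0"
    using o by (simp_all add: inner_commute)
  have "r * (inner (X - xn + wm) ((X - (1/r) *\<^sub>R W) - (un + um)) - inner (X - xn + wm) (X - wn + xm))
      = inner (r *\<^sub>R (X - (xn + xm)) - W - r *\<^sub>R um) ((wn + wm) - un)"
    using r
    by (simp add: inner_add_left inner_add_right inner_diff_left inner_diff_right o o2 algebra_simps)
       (simp add: inner_commute)
  then have "r * (inner (X - xn + wm) ((X - (1/r) *\<^sub>R W) - (un + um)) - inner (X - xn + wm) (X - wn + xm)) \<ge> 0"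
    using mono by simp
  then show ?thesis using r by (simp add: zero_le_mult_iff)
qed

theorem corollary3:
  fixes p :: "'s::finite \<Rightarrow> real"
    and sc :: "'s \<Rightarrow> nat \<Rightarrow> 'c"
    and N :: nat
    and stg :: "'i::finite \<Rightarrow> nat"
    and C :: "'s \<Rightarrow> (real^'i) set"
    and F :: "real^'i \<Rightarrow> 's \<Rightarrow> real^'i"
    and r sigmabar theta :: real
    and x w xh wh :: "nat \<Rightarrow> 's \<Rightarrow> real^'i"
    and sigma tau :: "nat \<Rightarrow> real"
  assumes p_pos: "\<And>s. p s > 0"
    and p_sum: "(\<Sum>s\<in>UNIV. p s) = 1"
    and sc_inj: "inj sc"
    and stg_range: "\<And>i. 1 \<le> stg i \<and> stg i \<le> N"
    and C_ne: "\<And>s. C s \<noteq> {}"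
    and C_closed: "\<And>s. closed (C s)"
    and C_convex: "\<And>s. convex (C s)"
    and F_cont: "\<And>s. continuous_on UNIV (\<lambda>y. F y s)"
    and F_mono: "\<And>s y z. inner (F y s - F z s) (y - z) \<ge> 0"
    and r_pos: "r > 0"
    and sol_exists: "\<exists>xs ws. svi_solution p sc stg F C xs ws"
    and outer_lip: "outer_lipschitz_at_0 p (Sinv p sc stg F C r)"
    and x0: "x 0 \<in> NNset sc stg"
    and w0: "w 0 \<in> MMset p (NNset sc stg)"
    and sigmabar: "0 < sigmabar" "sigmabar < 1"
    and theta: "0 < theta" "theta < 1"
    and sigma: "\<And>k. 0 \<le> sigma k \<and> sigma k < sigmabar"
    and subprob: "\<And>k s. r *\<^sub>R (x k s - xh k s) - w k s - F (wh k s) s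
                          \<in> normal_cone (C s) (wh k s)"
    and inexact: "\<And>k. (normL p (\<lambda>s. wh k s - xh k s))\<^sup>2
         \<le> (sigma k)\<^sup>2 * ((normL p (ipha_a p sc stg (x k) (xh k) (wh k)))\<^sup>2
                         + (normL p (ipha_b p sc stg (x k) (xh k) (wh k)))\<^sup>2)"
    and no_stop: "\<And>k. ipha_b p sc stg (x k) (xh k) (wh k) \<noteq> (\<lambda>s. 0)"
    and tau: "\<And>k. 1 - theta \<le> tau k \<and> tau k \<le> 1 + theta"
    and x_upd: "\<And>k. x (Suc k) = (\<lambda>s. x k s - (tau k * (ipL p (ipha_a p sc stg (x k) (xh k) (wh k))
                                                         (ipha_b p sc stg (x k) (xh k) (wh k))
                                      / (normL p (ipha_a p sc stg (x k) (xh k) (wh k)))\<^sup>2))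
                                   *\<^sub>R (x k s - PN p sc stg (xh k) s))"
    and w_upd: "\<And>k. w (Suc k) = (\<lambda>s. w k s + (tau k * (ipL p (ipha_a p sc stg (x k) (xh k) (wh k))
                                                         (ipha_b p sc stg (x k) (xh k) (wh k))
                                      / (normL p (ipha_a p sc stg (x k) (xh k) (wh k)))\<^sup>2) * r)
                                   *\<^sub>R PM p sc stg (wh k) s)"
  shows "\<exists>xs ws. svi_solution p sc stg F C xs ws \<and>
           (\<exists>c q. c \<ge> 0 \<and> 0 \<le> q \<and> q < 1 \<and>
              (\<forall>k. sqrt ((normL p (\<lambda>s. x k s - xs s))\<^sup>2 + (normL p (\<lambda>s. w k s - ws s))\<^sup>2 / r\<^sup>2)
                     \<le> c * q ^ k))"
proof -
  have p0: "\<And>s. p s \<ge> 0" using p_pos by (simp add: less_imp_le)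
  have LN: "lsub (NNset sc stg)" by (rule lsub_NN)
  have LM: "lsub (MMset p (NNset sc stg))" by (rule lsub_MM[where p=p, OF p0])
  have D: "\<And>v. PN p sc stg v \<in> NNset sc stg" "\<And>v. PM p sc stg v \<in> MMset p (NNset sc stg)"
    "\<And>v. v = (\<lambda>s. PN p sc stg v s + PM p sc stg v s)" using PNPM_decomp[where p=p] p_pos by blast+
  have Ev: "embL p v = embL p (PN p sc stg v) + embL p (PM p sc stg v)" for v
  proof -
    have "embL p v = embL p (\<lambda>s. PN p sc stg v s + PM p sc stg v s)" using D(3)[of v] by (rule arg_cong)
    then show ?thesis by (simp only: embL_add)
  qed
  have orth: "\<And>n m. n \<in> NNset sc stg \<Longrightarrow> m \<in> MMset p (NNset sc stg) \<Longrightarrow> inner (embL p n) (embL p m) = 0"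
    using NM_orth[where p=p] p_pos by blast
  have ipE: "\<And>a b. ipL p a b = inner (embL p a) (embL p b)" by (rule ipL_embL[where p=p, OF p0])
  have nE: "\<And>a. normL p a = norm (embL p a)" by (rule normL_embL[where p=p, OF p0])
  define alpha where "alpha k = tau k * (ipL p (ipha_a p sc stg (x k) (xh k) (wh k)) (ipha_b p sc stg (x k) (xh k) (wh k))
                                      / (normL p (ipha_a p sc stg (x k) (xh k) (wh k)))\<^sup>2)" for k
  have xw: "x k \<in> NNset sc stg \<and> w k \<in> MMset p (NNset sc stg)" for k
  proof (induction k)
    case 0
    then show ?case using x0 w0 by simp
  next
    case (Suc k)
    have "x (Suc k) = (\<lambda>s. x k s - alpha k *\<^sub>R (x k s - PN p sc stg (xh k) s))"
      using x_upd[of k] unfolding alpha_def by simp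
    moreover have "(\<lambda>s. x k s - alpha k *\<^sub>R (x k s - PN p sc stg (xh k) s)) \<in> NNset sc stg"
      using Suc by (intro lsub_diff[OF LN] lsub_scale[OF LN] D) auto
    moreover have "w (Suc k) = (\<lambda>s. w k s + (alpha k * r) *\<^sub>R PM p sc stg (wh k) s)"
      using w_upd[of k] unfolding alpha_def by simp
    moreover have "(\<lambda>s. w k s + (alpha k * r) *\<^sub>R PM p sc stg (wh k) s) \<in> MMset p (NNset sc stg)"
      using Suc by (intro lsub_add[OF LM] lsub_scale[OF LM] D) auto
    ultimately show ?case by simp
  qed
  define X where "X k = embL p (x k)" for k
  define W where "W k = embL p (w k)" for k
  define xn where "xn k = embL p (PN p sc stg (xh k))" for k
  define xm where "xm k = embL p (PM p sc stg (xh k))" for k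
  define wn where "wn k = embL p (PN p sc stg (wh k))" for k
  define wm where "wm k = embL p (PM p sc stg (wh k))" for k
  define A where "A k = embL p (ipha_a p sc stg (x k) (xh k) (wh k))" for k
  define B where "B k = embL p (ipha_b p sc stg (x k) (xh k) (wh k))" for k
  define Z where "Z k = X k - (1/r) *\<^sub>R W k" for k
  define S where "S k = (norm (A k))\<^sup>2 + (norm (B k))\<^sup>2" for k
  have A_eq: "A k = X k - xn k + wm k" for k
    unfolding A_def X_def xn_def wm_def ipha_a_def by (simp add: embL_add embL_diff)
  have B_eq: "B k = X k - wn k + xm k" for k
    unfolding B_def X_def wn_def xm_def ipha_b_def by (simp add: embL_add embL_diff)
  have Exh: "embL p (xh k) = xn k + xm k" for k unfolding xn_def xm_def by (rule Ev)
  have Ewh: "embL p (wh k) = wn k + wm k" for k unfolding wn_def wm_def by (rule Ev)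
  have alphaE: "alpha k = tau k * (inner (A k) (B k) / (norm (A k))\<^sup>2)" for k
    unfolding alpha_def A_def B_def ipE nE ..
  have Zsuc: "Z (Suc k) = Z k - alpha k *\<^sub>R A k" for k
  proof -
    have "X (Suc k) = X k - alpha k *\<^sub>R (X k - xn k)"
      unfolding X_def xn_def x_upd[of k] alpha_def[symmetric] by (simp add: embL_diff embL_scale)
    moreover have "W (Suc k) = W k + (alpha k * r) *\<^sub>R wm k"
      unfolding W_def wm_def w_upd[of k] alpha_def[symmetric] by (simp add: embL_add embL_scale)
    ultimately show ?thesis unfolding Z_def A_eq using r_pos by (simp add: algebra_simps)
  qed
  define e where "e = 1 - sigmabar\<^sup>2"
  have e0: "e > 0" unfolding e_def using sigmabar by (simp add: power_less_one_iff)
  have eAB: "2 * inner (A k) (B k) \<ge> e * S k" for k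
  proof -
    have AB: "A k - B k = embL p (\<lambda>s. wh k s - xh k s)"
      unfolding A_eq B_eq embL_diff Exh Ewh by (simp add: algebra_simps)
    have "(norm (A k - B k))\<^sup>2 \<le> (sigma k)\<^sup>2 * S k"
      using inexact[of k] unfolding nE AB[symmetric] A_def[symmetric] B_def[symmetric] S_def[symmetric] .
    moreover have "(sigma k)\<^sup>2 \<le> sigmabar\<^sup>2" using sigma[of k] by (simp add: power_mono)
    moreover have "S k \<ge> 0" unfolding S_def by simp
    ultimately have "(norm (A k - B k))\<^sup>2 \<le> sigmabar\<^sup>2 * S k" by (meson mult_right_mono order_trans)
    moreover have "(norm (A k - B k))\<^sup>2 = S k - 2 * inner (A k) (B k)"
      unfolding S_def power2_norm_eq_inner by (simp add: inner_diff_left inner_diff_right inner_commute)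
    ultimately show ?thesis unfolding e_def by (simp add: algebra_simps)
  qed
  have Ane: "A k \<noteq> 0" for k
  proof
    assume A0: "A k = 0"
    then have "e * S k \<le> 0" using eAB[of k] by simp
    then have "S k \<le> 0" using e0 by (simp add: mult_le_0_iff)
    then have "B k = 0" unfolding S_def using A0 by simp
    then have "embL p (ipha_b p sc stg (x k) (xh k) (wh k)) = embL p (\<lambda>s. 0)" unfolding B_def embL_zero .
    then have "ipha_b p sc stg (x k) (xh k) (wh k) = (\<lambda>s. 0)" using embL_inj[of p] p_pos by blast
    then show False using no_stop[of k] by simp
  qed
  define ZZ where "ZZ = Sinv p sc stg F C r (\<lambda>s. 0)"
  have ZZ_iff: "u \<in> ZZ \<longleftrightarrow> (\<forall>s. r *\<^sub>R PM p sc stg u s - F (PN p sc stg u s) s \<in> normal_cone (C s) (PN p sc stg u s))" for u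
    unfolding ZZ_def by (rule Sinv0_iff[where p=p and sc=sc and stg=stg and F=F and C=C and r=r and u=u, OF p_pos r_pos])
  have fej: "inner (A k) (Z k - embL p u) \<ge> inner (A k) (B k)" if u: "u \<in> ZZ" for k u
  proof -
    define un where "un = embL p (PN p sc stg u)"
    define um where "um = embL p (PM p sc stg u)"
    have Eu: "embL p u = un + um" unfolding un_def um_def by (rule Ev)
    have monoL: "ipL p (\<lambda>s. (r *\<^sub>R (x k s - xh k s) - w k s) - r *\<^sub>R PM p sc stg u s) (\<lambda>s. wh k s - PN p sc stg u s) \<ge> 0"
      unfolding ipL_def
    proof (rule sum_nonneg)
      fix s
      have "inner ((r *\<^sub>R (x k s - xh k s) - w k s) - r *\<^sub>R PM p sc stg u s) (wh k s - PN p sc stg u s) \<ge> 0"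
      proof (rule pointwise_mono[where F="\<lambda>y. F y s"])
        show "\<And>y z. inner (F y s - F z s) (y - z) \<ge> 0" by (rule F_mono)
        show "r *\<^sub>R (x k s - xh k s) - w k s - F (wh k s) s \<in> normal_cone (C s) (wh k s)" by (rule subprob)
        show "r *\<^sub>R PM p sc stg u s - F (PN p sc stg u s) s \<in> normal_cone (C s) (PN p sc stg u s)"
          using u ZZ_iff by blast
      qed
      then show "p s * inner ((r *\<^sub>R (x k s - xh k s) - w k s) - r *\<^sub>R PM p sc stg u s) (wh k s - PN p sc stg u s) \<ge> 0"
        using p0[of s] by simp
    qed
    have e1: "embL p (\<lambda>s. (r *\<^sub>R (x k s - xh k s) - w k s) - r *\<^sub>R PM p sc stg u s)
        = r *\<^sub>R (X k - (xn k + xm k)) - W k - r *\<^sub>R um"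
      by (simp add: embL_diff embL_scale X_def W_def um_def Exh)
    have e2: "embL p (\<lambda>s. wh k s - PN p sc stg u s) = (wn k + wm k) - un"
      by (simp add: embL_diff Ewh un_def)
    have monoE: "inner (r *\<^sub>R (X k - (xn k + xm k)) - W k - r *\<^sub>R um) ((wn k + wm k) - un) \<ge> 0"
      using monoL unfolding ipE e1 e2 .
    have NX: "x k \<in> NNset sc stg" and MW: "w k \<in> MMset p (NNset sc stg)" using xw by blast+
    have o: "inner (X k) (W k) = 0" "inner (X k) (xm k) = 0" "inner (X k) (wm k) = 0" "inner (X k) um = 0"
      "inner (xn k) (W k) = 0" "inner (xn k) (xm k) = 0" "inner (xn k) (wm k) = 0" "inner (xn k) um = 0"
      "inner (wn k) (W k) = 0" "inner (wn k) (xm k) = 0" "inner (wn k) (wm k) = 0" "inner (wn k) um = 0"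
      "inner un (W k) = 0" "inner un (xm k) = 0" "inner un (wm k) = 0" "inner un um = 0"
      unfolding X_def W_def xn_def xm_def wn_def wm_def un_def um_def
      by (intro orth NX MW D)+
    show ?thesis
      using fejer_identity[OF o r_pos monoE] unfolding A_eq B_eq Z_def Eu .
  qed
  define kappa where "kappa = (1 - theta\<^sup>2) * (e/2)\<^sup>2"
  have kappa0: "kappa > 0"
  proof -
    have "theta\<^sup>2 < 1" using theta by (simp add: power_less_one_iff)
    then show ?thesis unfolding kappa_def using e0 by simp
  qed
  have step: "(norm (Z (Suc k) - embL p u))\<^sup>2 \<le> (norm (Z k - embL p u))\<^sup>2 - kappa * S k" if u: "u \<in> ZZ" for k u
  proof -
    have "Z (Suc k) = Z k - (tau k * (inner (A k) (B k) / (norm (A k))\<^sup>2)) *\<^sub>R A k"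
      using Zsuc[of k] alphaE[of k] by simp
    from step_ineq[OF fej[OF u, of k] eAB[of k, unfolded S_def] e0 Ane[of k] _ _ theta this]
    show ?thesis using tau[of k] unfolding kappa_def S_def by (simp add: mult.assoc)
  qed
  obtain xs0 ws0 where sol0: "svi_solution p sc stg F C xs0 ws0" using sol_exists by blast
  define ustar where "ustar = (\<lambda>s. xs0 s - (1/r) *\<^sub>R ws0 s)"
  have ustar: "ustar \<in> ZZ"
  proof -
    have xs0N: "xs0 \<in> NNset sc stg" and ws0M: "ws0 \<in> MMset p (NNset sc stg)"
      and nc0: "\<And>s. - F (xs0 s) s - ws0 s \<in> normal_cone (C s) (xs0 s)"
      using sol0 unfolding svi_solution_def by blast+
    have mM: "(\<lambda>s. - ((1/r) *\<^sub>R ws0 s)) \<in> MMset p (NNset sc stg)"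
      by (intro lsub_uminus[OF LM] lsub_scale[OF LM] ws0M)
    have pu: "PN p sc stg ustar = xs0 \<and> PM p sc stg ustar = (\<lambda>s. - ((1/r) *\<^sub>R ws0 s))"
      by (rule PNPM_unique'[where p=p, OF p_pos xs0N mM]) (simp add: ustar_def)
    have eq: "r *\<^sub>R (- ((1/r) *\<^sub>R ws0 s)) - F (xs0 s) s = - F (xs0 s) s - ws0 s" for s
      using r_pos by (simp add: algebra_simps)
    show ?thesis unfolding ZZ_iff conjunct1[OF pu] conjunct2[OF pu] eq using nc0 by blast
  qed
  have monoZ: "norm (Z (k + m) - embL p u) \<le> norm (Z k - embL p u)" if u: "u \<in> ZZ" for k m u
  proof (induction m)
    case 0
    then show ?case by simp
  next
    case (Suc m)
    have "kappa * S (k + m) \<ge> 0" using kappa0 unfolding S_def by simp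
    then have "(norm (Z (Suc (k + m)) - embL p u))\<^sup>2 \<le> (norm (Z (k + m) - embL p u))\<^sup>2"
      using step[OF u, of "k + m"] by linarith
    then have "norm (Z (Suc (k + m)) - embL p u) \<le> norm (Z (k + m) - embL p u)"
      by (rule power2_le_imp_le) simp
    then show ?case using Suc by simp
  qed
  obtain L1 L2 where L1: "L1 \<ge> 0" and L2: "L2 > 0" and clZ: "closedL p ZZ"
    and OL: "\<And>v u. normL p v \<le> L2 \<Longrightarrow> u \<in> Sinv p sc stg F C r v \<Longrightarrow>
                 \<exists>u0\<in>ZZ. normL p (\<lambda>s. u s - u0 s) \<le> L1 * normL p v"
    using outer_lip unfolding outer_lipschitz_at_0_def ZZ_def by blast
  define dd where "dd k = Inf ((\<lambda>u. norm (Z k - embL p u)) ` ZZ)" for k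
  have ZZne: "ZZ \<noteq> {}" using ustar by blast
  have bdd: "bdd_below ((\<lambda>u. norm (Z k - embL p u)) ` ZZ)" for k
    by (rule bdd_belowI[where m=0]) auto
  have dd_le: "dd k \<le> norm (Z k - embL p u)" if "u \<in> ZZ" for k u
    unfolding dd_def by (rule cInf_lower[OF imageI[OF that] bdd])
  have dd_ge: "b \<le> dd k" if "\<And>u. u \<in> ZZ \<Longrightarrow> b \<le> norm (Z k - embL p u)" for b k
    unfolding dd_def using ZZne that by (intro cInf_greatest) auto
  have dd0: "dd k \<ge> 0" for k by (rule dd_ge) simp
  have dd_approx: "\<exists>u\<in>ZZ. norm (Z k - embL p u) < dd k + eps" if "eps > 0" for k eps
  proof -
    have "Inf ((\<lambda>u. norm (Z k - embL p u)) ` ZZ) < dd k + eps" unfolding dd_def using that by simp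
    then show ?thesis using cInf_less_iff[of "(\<lambda>u. norm (Z k - embL p u)) ` ZZ", OF _ bdd] ZZne by auto
  qed
  define D0 where "D0 = norm (Z 0 - embL p ustar)"
  define Mc where "Mc = 1 + L1\<^sup>2 * r\<^sup>2 + D0\<^sup>2 * r\<^sup>2 / L2\<^sup>2"
  have Mc0: "Mc > 0" unfolding Mc_def using L2
    by (simp add: add_pos_nonneg)
  have S0: "S k \<ge> 0" for k unfolding S_def by simp
  have ddS: "(dd k)\<^sup>2 \<le> Mc * S k" for k
  proof (cases "r * norm (A k) \<le> L2")
    case True
    define v where "v = (\<lambda>s. r *\<^sub>R ipha_a p sc stg (x k) (xh k) (wh k) s)"
    define uit where "uit = (\<lambda>s. PN p sc stg (wh k) s - PM p sc stg (xh k) s - (1/r) *\<^sub>R w k s)"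
    have nv: "normL p v = r * norm (A k)" unfolding v_def nE embL_scale A_def using r_pos by simp
    have uit: "uit \<in> Sinv p sc stg F C r v" unfolding uit_def v_def
      using iter_in_Sinv[where p=p and r=r and x="x k" and w="w k" and xh="xh k" and wh="wh k"
          and F=F and C=C and sc=sc and stg=stg, OF p_pos r_pos] xw subprob by blast
    obtain u0 where u0: "u0 \<in> ZZ" and nu0: "normL p (\<lambda>s. uit s - u0 s) \<le> L1 * normL p v"
      using OL[OF _ uit] True nv by auto
    have Euit: "embL p uit = Z k - B k"
      unfolding uit_def embL_diff embL_scale Z_def B_eq wn_def xm_def W_def X_def by (simp add: algebra_simps)
    have "norm (Z k - B k - embL p u0) \<le> L1 * (r * norm (A k))"
      using nu0[unfolded nv] unfolding nE embL_diff Euit .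
    moreover have "norm (Z k - embL p u0) \<le> norm (B k) + norm (Z k - B k - embL p u0)"
      using norm_triangle_ineq[of "B k" "Z k - B k - embL p u0"] by simp
    ultimately have h: "dd k \<le> norm (B k) + (L1 * r) * norm (A k)"
      using dd_le[OF u0, of k] by (simp add: mult.assoc)
    have "(dd k)\<^sup>2 \<le> (norm (B k) + (L1 * r) * norm (A k))\<^sup>2" using h dd0 by (simp add: power_mono)
    also have "\<dots> \<le> (1 + (L1 * r)\<^sup>2) * S k"
    proof -
      have "0 \<le> (norm (A k) - (L1 * r) * norm (B k))\<^sup>2" by simp
      then show ?thesis unfolding S_def by (simp add: power2_eq_square algebra_simps)
    qed
    also have "\<dots> \<le> Mc * S k"
    proof (rule mult_right_mono[OF _ S0])
      have "D0\<^sup>2 * r\<^sup>2 / L2\<^sup>2 \<ge> 0" by simp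
      then show "1 + (L1 * r)\<^sup>2 \<le> Mc" unfolding Mc_def by (simp add: power_mult_distrib)
    qed
    finally show ?thesis .
  next
    case False
    have "dd k \<le> D0" using dd_le[OF ustar, of k] monoZ[OF ustar, of 0 k] unfolding D0_def by simp
    then have "(dd k)\<^sup>2 \<le> D0\<^sup>2" using dd0 by (simp add: power_mono)
    also have "D0\<^sup>2 \<le> D0\<^sup>2 * (r * norm (A k) / L2)\<^sup>2"
    proof -
      have "1 \<le> r * norm (A k) / L2" using False L2 by simp
      then have "1 \<le> (r * norm (A k) / L2)\<^sup>2" by (simp add: one_le_power)
      from mult_left_mono[OF this, of "D0\<^sup>2"] show ?thesis by simp
    qed
    also have "\<dots> = (D0\<^sup>2 * r\<^sup>2 / L2\<^sup>2) * (norm (A k))\<^sup>2" by (simp add: power_mult_distrib power_divide)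
    also have "\<dots> \<le> Mc * S k"
    proof (rule mult_mono)
      show "D0\<^sup>2 * r\<^sup>2 / L2\<^sup>2 \<le> Mc" unfolding Mc_def by simp
      show "(norm (A k))\<^sup>2 \<le> S k" unfolding S_def by simp
      show "0 \<le> Mc" using Mc0 by simp
      show "0 \<le> (norm (A k))\<^sup>2" by simp
    qed
    finally show ?thesis .
  qed
  define c0 where "c0 = min (kappa / Mc) (1/2)"
  define q where "q = sqrt (1 - c0)"
  have c0: "c0 > 0" "c0 \<le> 1/2" unfolding c0_def using kappa0 Mc0 by (auto simp: min_def)
  have q: "q > 0" "q < 1" unfolding q_def using c0 by auto
  have ddrec: "dd (Suc k) \<le> q * dd k" for k
  proof -
    have h: "(dd (Suc k))\<^sup>2 + c0 * (dd k)\<^sup>2 \<le> (norm (Z k - embL p u))\<^sup>2" if u: "u \<in> ZZ" for u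
    proof -
      have "dd (Suc k) \<le> norm (Z (Suc k) - embL p u)" by (rule dd_le[OF u])
      then have "(dd (Suc k))\<^sup>2 \<le> (norm (Z (Suc k) - embL p u))\<^sup>2" using dd0 by (simp add: power_mono)
      moreover have "c0 * (dd k)\<^sup>2 \<le> kappa * S k"
      proof -
        have "c0 \<le> kappa / Mc" unfolding c0_def by simp
        then have "c0 * (dd k)\<^sup>2 \<le> (kappa / Mc) * (dd k)\<^sup>2" by (rule mult_right_mono) simp
        also have "\<dots> \<le> (kappa / Mc) * (Mc * S k)" using ddS[of k] kappa0 Mc0 by (intro mult_left_mono) simp_all
        also have "\<dots> = kappa * S k" using Mc0 by simp
        finally show ?thesis .
      qed
      ultimately show ?thesis using step[OF u, of k] by linarith
    qed
    have "sqrt ((dd (Suc k))\<^sup>2 + c0 * (dd k)\<^sup>2) \<le> dd k"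
      by (rule dd_ge, rule real_le_lsqrt[OF norm_ge_zero h])
    then have "(dd (Suc k))\<^sup>2 + c0 * (dd k)\<^sup>2 \<le> (dd k)\<^sup>2" by (rule sqrt_le_D)
    moreover have q2: "q\<^sup>2 = 1 - c0" unfolding q_def using c0 by simp
    moreover have "(q * dd k)\<^sup>2 = (dd k)\<^sup>2 - c0 * (dd k)\<^sup>2"
      unfolding power_mult_distrib q2 by (simp add: left_diff_distrib)
    ultimately have "(dd (Suc k))\<^sup>2 \<le> (q * dd k)\<^sup>2" by linarith
    moreover have "0 \<le> q * dd k" using q dd0[of k] by simp
    ultimately show ?thesis by (rule power2_le_imp_le)
  qed
  have ddk: "dd k \<le> dd 0 * q ^ k" for k
  proof (induction k)
    case 0
    then show ?case by simp
  next
    case (Suc k)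
    have "dd (Suc k) \<le> q * dd k" by (rule ddrec)
    also have "\<dots> \<le> q * (dd 0 * q ^ k)" using Suc q by (simp add: mult_left_mono)
    finally show ?case by (simp add: algebra_simps)
  qed
  define K where "K = 2 * dd 0"
  have K0: "K \<ge> 0" using dd0 by (simp add: K_def)
  have ZC: "norm (Z (k + m) - Z k) \<le> K * q ^ k" for k m
  proof -
    have "norm (Z (k + m) - Z k) / 2 \<le> dd k"
    proof (rule dd_ge)
      fix u assume u: "u \<in> ZZ"
      have "norm (Z (k + m) - Z k) \<le> norm (Z (k + m) - embL p u) + norm (Z k - embL p u)"
        using norm_triangle_ineq4[of "Z (k + m) - embL p u" "Z k - embL p u"] by simp
      then show "norm (Z (k + m) - Z k) / 2 \<le> norm (Z k - embL p u)" using monoZ[OF u, of k m] by simp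
    qed
    then show ?thesis using ddk[of k] unfolding K_def by simp
  qed
  have "Cauchy Z"
  proof (rule metric_CauchyI)
    fix eps :: real assume eps: "eps > 0"
    have "eps / (2 * K + 1) > 0" using eps K0 by simp
    then obtain M where M: "q ^ M < eps / (2 * K + 1)" using real_arch_pow_inv q by blast
    have "dist (Z m) (Z n) < eps" if "m \<ge> M" "n \<ge> M" for m n
    proof -
      have "norm (Z m - Z M) \<le> K * q ^ M" using ZC[of M "m - M"] that by simp
      moreover have "norm (Z n - Z M) \<le> K * q ^ M" using ZC[of M "n - M"] that by simp
      moreover have "dist (Z m) (Z n) \<le> norm (Z m - Z M) + norm (Z n - Z M)"
        unfolding dist_norm using norm_triangle_ineq4[of "Z m - Z M" "Z n - Z M"] by simp
      moreover have "2 * K * q ^ M < eps"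
      proof -
        have "(2 * K + 1) * q ^ M < eps" using M K0 by (simp add: pos_less_divide_eq mult.commute)
        moreover have "2 * K * q ^ M \<le> (2 * K + 1) * q ^ M" using q by simp
        ultimately show ?thesis by linarith
      qed
      ultimately show ?thesis by linarith
    qed
    then show "\<exists>M. \<forall>m\<ge>M. \<forall>n\<ge>M. dist (Z m) (Z n) < eps" by blast
  qed
  then obtain Zinf where Zlim: "Z \<longlonglongrightarrow> Zinf" using Cauchy_convergent convergent_def by blast
  have Zb: "norm (Z k - Zinf) \<le> K * q ^ k" for k
  proof -
    have "(\<lambda>m. norm (Z (m + k) - Z k)) \<longlonglongrightarrow> norm (Zinf - Z k)"
      by (intro tendsto_intros LIMSEQ_ignore_initial_segment[OF Zlim])
    moreover have "\<exists>N. \<forall>m\<ge>N. norm (Z (m + k) - Z k) \<le> K * q ^ k" using ZC[of k] by (simp add: add.commute)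
    ultimately have "norm (Zinf - Z k) \<le> K * q ^ k" by (rule LIMSEQ_le_const2)
    then show ?thesis by (simp add: norm_minus_commute)
  qed
  define uinf where "uinf = (\<lambda>s. \<chi> i. Zinf $ (s, i) / sqrt (p s))"
  have Euinf: "embL p uinf = Zinf" unfolding uinf_def by (rule embL_surj[where p=p, OF p_pos])
  have "\<forall>k. \<exists>u. u \<in> ZZ \<and> norm (Z k - embL p u) < dd k + q ^ k"
    using dd_approx q by (meson zero_less_power)
  then obtain f where f: "\<And>k. f k \<in> ZZ" "\<And>k. norm (Z k - embL p (f k)) < dd k + q ^ k" by metis
  have "(\<lambda>k. normL p (\<lambda>s. f k s - uinf s)) \<longlonglongrightarrow> 0"
  proof (rule tendsto_sandwich[where f="\<lambda>k. 0" and h="\<lambda>k. (dd 0 + 1 + K) * q ^ k"])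
    show "eventually (\<lambda>k. 0 \<le> normL p (\<lambda>s. f k s - uinf s)) sequentially" by (simp add: nE)
    show "eventually (\<lambda>k. normL p (\<lambda>s. f k s - uinf s) \<le> (dd 0 + 1 + K) * q ^ k) sequentially"
    proof (rule always_eventually, rule allI)
      fix k
      have "normL p (\<lambda>s. f k s - uinf s) = norm (embL p (f k) - Zinf)" unfolding nE embL_diff Euinf ..
      also have "\<dots> \<le> norm (Z k - embL p (f k)) + norm (Z k - Zinf)"
        using norm_triangle_ineq4[of "Z k - Zinf" "Z k - embL p (f k)"] by (simp add: add.commute)
      also have "\<dots> \<le> (dd k + q ^ k) + K * q ^ k" using f(2)[of k] Zb[of k] by simp
      also have "\<dots> \<le> (dd 0 + 1 + K) * q ^ k" using ddk[of k] by (simp add: algebra_simps)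
      finally show "normL p (\<lambda>s. f k s - uinf s) \<le> (dd 0 + 1 + K) * q ^ k" .
    qed
    show "(\<lambda>k. 0::real) \<longlonglongrightarrow> 0" by simp
    have "(\<lambda>k. (dd 0 + 1 + K) * q ^ k) \<longlonglongrightarrow> (dd 0 + 1 + K) * 0"
      by (intro tendsto_mult tendsto_const LIMSEQ_power_zero) (use q in simp)
    then show "(\<lambda>k. (dd 0 + 1 + K) * q ^ k) \<longlonglongrightarrow> 0" by simp
  qed
  then have uinfZ: "uinf \<in> ZZ" using clZ f(1) unfolding closedL_def by blast
  define xs where "xs = PN p sc stg uinf"
  define ws where "ws = (\<lambda>s. - (r *\<^sub>R PM p sc stg uinf s))"
  have solv: "svi_solution p sc stg F C xs ws"
    unfolding svi_solution_def
  proof (intro conjI allI)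
    show "xs \<in> NNset sc stg" unfolding xs_def by (rule D(1))
    show "ws \<in> MMset p (NNset sc stg)" unfolding ws_def by (intro lsub_uminus[OF LM] lsub_scale[OF LM] D(2))
    fix s
    have nc: "r *\<^sub>R PM p sc stg uinf s - F (PN p sc stg uinf s) s \<in> normal_cone (C s) (PN p sc stg uinf s)"
      using uinfZ ZZ_iff by blast
    have eq: "- F (xs s) s - ws s = r *\<^sub>R PM p sc stg uinf s - F (PN p sc stg uinf s) s"
      unfolding xs_def ws_def by simp
    show "- F (xs s) s - ws s \<in> normal_cone (C s) (xs s)" unfolding eq unfolding xs_def by (rule nc)
  qed
  have fin: "sqrt ((normL p (\<lambda>s. x k s - xs s))\<^sup>2 + (normL p (\<lambda>s. w k s - ws s))\<^sup>2 / r\<^sup>2) \<le> K * q ^ k" for k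
  proof -
    define uN where "uN = embL p (PN p sc stg uinf)"
    define uM where "uM = embL p (PM p sc stg uinf)"
    have Zi: "Zinf = uN + uM" using Ev[of uinf] Euinf unfolding uN_def uM_def by simp
    define a where "a = X k - uN"
    define b where "b = W k + r *\<^sub>R uM"
    have na: "normL p (\<lambda>s. x k s - xs s) = norm a" unfolding nE embL_diff a_def X_def uN_def xs_def ..
    have "embL p (\<lambda>s. w k s - ws s) = b" unfolding ws_def b_def W_def uM_def
      by (simp add: embL_add embL_scale)
    then have nb: "normL p (\<lambda>s. w k s - ws s) = norm b" unfolding nE by simp
    have NX: "x k \<in> NNset sc stg" and MW: "w k \<in> MMset p (NNset sc stg)" using xw by blast+
    have o: "inner (X k) (W k) = 0" "inner (X k) uM = 0" "inner uN (W k) = 0" "inner uN uM = 0"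
      unfolding X_def W_def uN_def uM_def by (intro orth NX MW D)+
    have ab: "inner a b = 0" unfolding a_def b_def by (simp add: inner_diff_left inner_add_right o)
    have "Z k - Zinf = a - (1/r) *\<^sub>R b" unfolding Z_def Zi a_def b_def using r_pos by (simp add: algebra_simps)
    then have "(norm (Z k - Zinf))\<^sup>2 = (norm a)\<^sup>2 + (norm b)\<^sup>2 / r\<^sup>2"
      unfolding power2_norm_eq_inner using ab r_pos
      by (simp add: inner_diff_left inner_diff_right inner_commute power2_eq_square)
    then have "sqrt ((normL p (\<lambda>s. x k s - xs s))\<^sup>2 + (normL p (\<lambda>s. w k s - ws s))\<^sup>2 / r\<^sup>2) = norm (Z k - Zinf)"
      unfolding na nb by (metis norm_ge_zero real_sqrt_abs abs_of_nonneg)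
    then show ?thesis using Zb[of k] by simp
  qed
  have "0 \<le> q" "q < 1" using q by auto
  then show ?thesis using solv K0 fin by blast
qed

end
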